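(* Let $m \ge 2$ and $n \ge 1$ be integers, let $K_m = (V, E)$ be the complete graph on $m$ vertices, and let $E = E_1 \cup \dots \cup E_n$ be a partition of its edge set into $n$ parts. Define the load balance $\alpha = \min_{i} \frac{|E_i| \cdot n}{|E|}$ and the replication factor $RF = \frac{\sum_{i=1}^n |V(E_i)|}{|V|}$, where $V(E_i)$ denotes the set of vertices incident to at least one edge of $E_i$. Then $$RF \ge \sqrt{\alpha} \cdot \sqrt{n} \cdot \sqrt{\frac{m-1}{m}}.$$ *)

theory Defs
  imports Complex_Main
begin

definition complete_edges :: "'a set \<Rightarrow> 'a set set" where
  "complete_edges V = {e. e \<subseteq> V \<and> card e = 2}"

definition incident_vertices :: "'a set set \<Rightarrow> 'a set" where
  "incident_vertices F = \<Union> F"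

definition load_balance :: "'a set set \<Rightarrow> nat \<Rightarrow> (nat \<Rightarrow> 'a set set) \<Rightarrow> real" where
  "load_balance E n P = Min ((\<lambda>i. real (card (P i)) * real n / real (card E)) ` {1..n})"

definition replication_factor :: "'a set \<Rightarrow> nat \<Rightarrow> (nat \<Rightarrow> 'a set set) \<Rightarrow> real" where
  "replication_factor V n P = (\<Sum>i=1..n. real (card (incident_vertices (P i)))) / real (card V)"

end

theory Submission
  imports Defs
begin

lemma two_choose2: "2 * (k choose 2) = k * (k - 1)"
proof -
  have "even (k * (k - 1))" by (cases "even k") auto
  then show ?thesis by (simp add: choose_two)
qed

lemma choose2_bound: "2 * real (k choose 2) \<le> real k ^ 2"
proof -
  have "2 * (k choose 2) = k * (k - 1)" by (rule two_choose2)
  then have "2 * (k choose 2) \<le> k * k" by simp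
  then have "real (2 * (k choose 2)) \<le> real (k * k)" by linarith
  then show ?thesis by (simp add: power2_eq_square)
qed

theorem theorem3:
  fixes V :: "'a set" and m n :: nat and P :: "nat \<Rightarrow> 'a set set"
  assumes "finite V" and "card V = m" and "m \<ge> 2" and "n \<ge> 1"
    and "\<Union> (P ` {1..n}) = complete_edges V"
    and "\<And>i j. i \<in> {1..n} \<Longrightarrow> j \<in> {1..n} \<Longrightarrow> i \<noteq> j \<Longrightarrow> P i \<inter> P j = {}"
  shows "replication_factor V n P \<ge>
           sqrt (load_balance (complete_edges V) n P) * sqrt (real n) * sqrt ((real m - 1) / real m)"
proof -
  define E where "E = complete_edges V"
  define a where "a = load_balance E n P"
  have cardE: "card E = m choose 2"
    unfolding E_def complete_edges_def using n_subsets[OF assms(1), of 2] assms(2) by simp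
  have cardE2: "2 * real (card E) = real m * (real m - 1)"
  proof -
    have "2 * (m choose 2) = m * (m - 1)" by (rule two_choose2)
    then have "real (2 * (m choose 2)) = real (m * (m - 1))" by (simp only:)
    then show ?thesis using cardE assms(3) by (simp add: of_nat_diff)
  qed
  have Epos: "card E > 0" using cardE assms(3) by simp
  have fin: "finite ((\<lambda>i. real (card (P i)) * real n / real (card E)) ` {1..n})" by simp
  have ne: "(\<lambda>i. real (card (P i)) * real n / real (card E)) ` {1..n} \<noteq> {}" using assms(4) by auto
  have a_le: "a \<le> real (card (P i)) * real n / real (card E)" if "i \<in> {1..n}" for i
    unfolding a_def load_balance_def using fin that by (intro Min_le) auto
  have a_nn: "a \<ge> 0"
  proof -
    have "a \<in> (\<lambda>i. real (card (P i)) * real n / real (card E)) ` {1..n}"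
      unfolding a_def load_balance_def using Min_in[OF fin ne] by simp
    then show ?thesis by auto
  qed
  define c where "c = a * real m * (real m - 1) / real n"
  have c_nn: "c \<ge> 0" using a_nn assms(3) unfolding c_def by simp
  have vi: "sqrt c \<le> real (card (incident_vertices (P i)))" if i: "i \<in> {1..n}" for i
  proof -
    define U where "U = incident_vertices (P i)"
    have PE: "P i \<subseteq> complete_edges V" using assms(5) i by blast
    have UV: "U \<subseteq> V" using PE unfolding U_def incident_vertices_def complete_edges_def by blast
    have finU: "finite U" using UV assms(1) finite_subset by blast
    have sub: "P i \<subseteq> {e. e \<subseteq> U \<and> card e = 2}"
      using PE unfolding U_def incident_vertices_def complete_edges_def by blast
    have "card (P i) \<le> card {e. e \<subseteq> U \<and> card e = 2}"
      by (rule card_mono[OF _ sub]) (use finU in auto)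
    also have "\<dots> = card U choose 2" using n_subsets[OF finU] by simp
    finally have "2 * real (card (P i)) \<le> real (card U) ^ 2"
      using choose2_bound[of "card U"] by linarith
    moreover have "c \<le> 2 * real (card (P i))"
    proof -
      have "a * real (card E) \<le> real (card (P i)) * real n"
        using a_le[OF i] Epos by (simp add: pos_le_divide_eq)
      then have "a * (2 * real (card E)) \<le> 2 * real (card (P i)) * real n" by linarith
      then have "a * real m * (real m - 1) \<le> 2 * real (card (P i)) * real n"
        using cardE2 by (simp add: mult.assoc)
      then show ?thesis unfolding c_def using assms(4) by (simp add: pos_divide_le_eq)
    qed
    ultimately have "c \<le> real (card U) ^ 2" by linarith
    then have "sqrt c \<le> sqrt (real (card U) ^ 2)" using real_sqrt_le_mono by blast
    then show ?thesis unfolding U_def by simp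
  qed
  have "(\<Sum>i=1..n. sqrt c) \<le> (\<Sum>i=1..n. real (card (incident_vertices (P i))))"
    by (rule sum_mono) (rule vi)
  then have S: "real n * sqrt c \<le> (\<Sum>i=1..n. real (card (incident_vertices (P i))))" by simp
  have mpos: "real m > 0" using assms(3) by simp
  have "sqrt a * sqrt (real n) * sqrt ((real m - 1) / real m) = sqrt (a * real n * ((real m - 1) / real m))"
    by (simp only: real_sqrt_mult)
  also have "a * real n * ((real m - 1) / real m) = (real n / real m)^2 * c"
    unfolding c_def using assms(4) mpos by (simp add: field_simps power2_eq_square)
  also have "sqrt ((real n / real m)^2 * c) = real n / real m * sqrt c"
    by (simp add: real_sqrt_mult)
  also have "\<dots> = real n * sqrt c / real m" by simp
  also have "\<dots> \<le> (\<Sum>i=1..n. real (card (incident_vertices (P i)))) / real m"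
    using S mpos by (simp add: divide_right_mono)
  finally show ?thesis unfolding replication_factor_def a_def E_def using assms(2) by simp
qed

end
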